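(* Let $\mathscr{H}_3$ be the class of graphs $G$ on at least twelve vertices with $\gamma(G)=2$ and $\operatorname{diam}(\overline{G})\ge 3$. Then $\mathscr{H}_3$ is recognizable: every graph $H$ with $\mathscr{D}(H)=\mathscr{D}(G)$ for some $G\in\mathscr{H}_3$ belongs to $\mathscr{H}_3$.
   Context: All graphs are finite, simple and undirected; $\overline{G}$ is the complement, $\operatorname{diam}$ the diameter (infinite for disconnected graphs) and $\gamma$ the domination number. For a vertex $v$, the card $G-v$ is the unlabeled graph obtained by deleting $v$; the deck $\mathscr{D}(G)$ is the multiset of all cards up to isomorphism. A class of graphs is recognizable if every reconstruction (graph with the same deck) of a member of the class is again a member. *)

theory Defs
  imports Main "HOL-Library.Multiset" "HOL-Library.Extended_Nat"
begin

type_synonym 'a sgraph = "'a set \<times> ('a \<Rightarrow> 'a \<Rightarrow> bool)"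

definition verts :: "'a sgraph \<Rightarrow> 'a set" where "verts G = fst G"
definition adj :: "'a sgraph \<Rightarrow> 'a \<Rightarrow> 'a \<Rightarrow> bool" where "adj G = snd G"

definition wf_graph :: "'a sgraph \<Rightarrow> bool" where
  "wf_graph G \<longleftrightarrow> finite (verts G)
     \<and> (\<forall>x y. adj G x y \<longrightarrow> x \<in> verts G \<and> y \<in> verts G)
     \<and> (\<forall>x y. adj G x y \<longrightarrow> adj G y x)
     \<and> (\<forall>x. \<not> adj G x x)"

definition complement :: "'a sgraph \<Rightarrow> 'a sgraph" where
  "complement G = (verts G,
     \<lambda>x y. x \<in> verts G \<and> y \<in> verts G \<and> x \<noteq> y \<and> \<not> adj G x y)"

definition gdist :: "'a sgraph \<Rightarrow> 'a \<Rightarrow> 'a \<Rightarrow> enat" where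
  "gdist G u v = (if \<exists>n. (adj G ^^ n) u v
                  then enat (LEAST n. (adj G ^^ n) u v) else \<infinity>)"

definition diam :: "'a sgraph \<Rightarrow> enat" where
  "diam G = (SUP p \<in> verts G \<times> verts G. gdist G (fst p) (snd p))"

definition dominating :: "'a sgraph \<Rightarrow> 'a set \<Rightarrow> bool" where
  "dominating G D \<longleftrightarrow> D \<subseteq> verts G \<and>
     (\<forall>v \<in> verts G. v \<in> D \<or> (\<exists>d \<in> D. adj G v d))"

definition domination_number :: "'a sgraph \<Rightarrow> nat" where
  "domination_number G = (LEAST k. \<exists>D. dominating G D \<and> card D = k)"

definition graph_iso :: "'a sgraph \<Rightarrow> 'b sgraph \<Rightarrow> bool" where
  "graph_iso G H \<longleftrightarrow> (\<exists>f. bij_betw f (verts G) (verts H) \<and>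
     (\<forall>x \<in> verts G. \<forall>y \<in> verts G. adj G x y \<longleftrightarrow> adj H (f x) (f y)))"

definition card_del :: "'a sgraph \<Rightarrow> 'a \<Rightarrow> 'a sgraph" where
  "card_del G v = (verts G - {v}, \<lambda>x y. adj G x y \<and> x \<noteq> v \<and> y \<noteq> v)"

definition iso_class :: "'a sgraph \<Rightarrow> 'a sgraph set" where
  "iso_class G = {K. wf_graph K \<and> graph_iso K G}"

definition deck :: "'a sgraph \<Rightarrow> 'a sgraph set multiset" where
  "deck G = image_mset (\<lambda>v. iso_class (card_del G v)) (mset_set (verts G))"

definition H3 :: "'a sgraph \<Rightarrow> bool" where
  "H3 G \<longleftrightarrow> wf_graph G \<and> card (verts G) \<ge> 12 \<and> domination_number G = 2
            \<and> diam (complement G) \<ge> 3"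

end

theory Submission imports Defs begin

definition cnnset :: "'a sgraph \<Rightarrow> 'a \<Rightarrow> 'a \<Rightarrow> 'a set" where
  "cnnset X a b = {w \<in> verts X. w \<noteq> a \<and> w \<noteq> b \<and> \<not> adj X a w \<and> \<not> adj X b w}"
definition cnn :: "'a sgraph \<Rightarrow> 'a \<Rightarrow> 'a \<Rightarrow> nat" where
  "cnn X a b = card (cnnset X a b)"
definition NE :: "'a sgraph \<Rightarrow> nat \<Rightarrow> nat" where
  "NE X k = card {p \<in> verts X \<times> verts X. adj X (fst p) (snd p) \<and> cnn X (fst p) (snd p) = k}"
definition ecount :: "'a sgraph \<Rightarrow> nat" where
  "ecount X = card {p \<in> verts X \<times> verts X. adj X (fst p) (snd p)}"
definition nbrs :: "'a sgraph \<Rightarrow> 'a \<Rightarrow> 'a set" where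
  "nbrs X a = {y \<in> verts X. adj X a y}"

lemma verts_card_del[simp]: "verts (card_del X x) = verts X - {x}"
  by (simp add: card_del_def verts_def)
lemma adj_card_del[simp]: "adj (card_del X x) a b = (adj X a b \<and> a \<noteq> x \<and> b \<noteq> x)"
  by (simp add: card_del_def adj_def)

lemma wf_card_del: "wf_graph X \<Longrightarrow> wf_graph (card_del X x)"
  unfolding wf_graph_def by auto

lemma wfD: assumes "wf_graph X"
  shows "finite (verts X)" "adj X x y \<Longrightarrow> x \<in> verts X" "adj X x y \<Longrightarrow> y \<in> verts X"
    "adj X x y \<Longrightarrow> adj X y x" "\<not> adj X x x"
  using assms unfolding wf_graph_def by auto

lemma iso_refl: "graph_iso X X"
  unfolding graph_iso_def by (rule exI[of _ id]) auto

lemma card_pairs_iso: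
  assumes f: "bij_betw f A B"
    and Q: "\<And>a b. a \<in> A \<Longrightarrow> b \<in> A \<Longrightarrow> Q (f a) (f b) = P a b"
  shows "card {p \<in> B \<times> B. Q (fst p) (snd p)} = card {p \<in> A \<times> A. P (fst p) (snd p)}"
proof -
  have inj: "inj_on f A" and imB: "f ` A = B" using f by (auto simp: bij_betw_def)
  have "{p \<in> B \<times> B. Q (fst p) (snd p)} = map_prod f f ` {p \<in> A \<times> A. P (fst p) (snd p)}"
  proof
    show "{p \<in> B \<times> B. Q (fst p) (snd p)} \<subseteq> map_prod f f ` {p \<in> A \<times> A. P (fst p) (snd p)}"
    proof
      fix p assume p: "p \<in> {p \<in> B \<times> B. Q (fst p) (snd p)}"
      obtain x y where xy: "p = (x, y)" by (cases p)
      have "x \<in> f ` A" "y \<in> f ` A" using p xy imB by auto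
      then obtain a b where ab: "a \<in> A" "b \<in> A" "x = f a" "y = f b" by blast
      then have "P a b" using p xy Q by auto
      then show "p \<in> map_prod f f ` {p \<in> A \<times> A. P (fst p) (snd p)}"
        using ab xy by (auto intro!: image_eqI[of _ _ "(a,b)"])
    qed
    show "map_prod f f ` {p \<in> A \<times> A. P (fst p) (snd p)} \<subseteq> {p \<in> B \<times> B. Q (fst p) (snd p)}"
      using Q imB by fastforce
  qed
  moreover have "inj_on (map_prod f f) {p \<in> A \<times> A. P (fst p) (snd p)}"
    by (rule inj_on_subset[OF map_prod_inj_on[OF inj inj]]) auto
  ultimately show ?thesis by (simp add: card_image)
qed

lemma iso_inv:
  assumes "wf_graph X" "wf_graph Y" "graph_iso X Y"
  shows "ecount X = ecount Y" "NE X k = NE Y k"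
proof -
  obtain f where f: "bij_betw f (verts X) (verts Y)"
    and fa: "\<And>x y. x \<in> verts X \<Longrightarrow> y \<in> verts X \<Longrightarrow> adj X x y = adj Y (f x) (f y)"
    using assms(3) unfolding graph_iso_def by blast
  have inj: "inj_on f (verts X)" and im: "f ` verts X = verts Y" using f by (auto simp: bij_betw_def)
  show "ecount X = ecount Y" unfolding ecount_def
    by (rule card_pairs_iso[OF f, symmetric]) (simp add: fa)
  have cs: "cnnset Y (f a) (f b) = f ` cnnset X a b" if "a \<in> verts X" "b \<in> verts X" for a b
  proof
    show "f ` cnnset X a b \<subseteq> cnnset Y (f a) (f b)"
      using that fa inj im unfolding cnnset_def inj_on_def by auto
    show "cnnset Y (f a) (f b) \<subseteq> f ` cnnset X a b"
    proof
      fix w assume w: "w \<in> cnnset Y (f a) (f b)"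
      then obtain z where z: "z \<in> verts X" "w = f z" using im unfolding cnnset_def by auto
      then show "w \<in> f ` cnnset X a b" using w that fa unfolding cnnset_def by auto
    qed
  qed
  have cc: "cnn Y (f a) (f b) = cnn X a b" if "a \<in> verts X" "b \<in> verts X" for a b
  proof -
    have "inj_on f (cnnset X a b)" by (rule inj_on_subset[OF inj]) (auto simp: cnnset_def)
    then show ?thesis unfolding cnn_def using cs[OF that] by (simp add: card_image)
  qed
  show "NE X k = NE Y k" unfolding NE_def
    by (rule card_pairs_iso[OF f, symmetric]) (simp add: fa cc)
qed

lemma self_in_iso_class: "wf_graph X \<Longrightarrow> X \<in> iso_class X"
  unfolding iso_class_def using iso_refl by blast

lemma sum_deck:
  assumes wf: "wf_graph X"
    and inv: "\<And>A B. wf_graph A \<Longrightarrow> wf_graph B \<Longrightarrow> graph_iso A B \<Longrightarrow> \<phi> A = \<phi> B"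
  shows "(\<Sum>x\<in>verts X. \<phi> (card_del X x)) = sum_mset (image_mset (\<lambda>C. \<phi> (SOME K. K \<in> C)) (deck X))"
proof -
  define \<psi> where "\<psi> = (\<lambda>C. \<phi> (SOME K. K \<in> C))"
  have eqx: "\<phi> (card_del X x) = \<psi> (iso_class (card_del X x))" for x
  proof -
    define C where "C = card_del X x"
    have w: "wf_graph C" unfolding C_def using wf by (rule wf_card_del)
    then have "C \<in> iso_class C" by (rule self_in_iso_class)
    then have "(SOME K. K \<in> iso_class C) \<in> iso_class C" by (rule someI)
    then obtain K where K: "K = (SOME K. K \<in> iso_class C)" "K \<in> iso_class C" by blast
    then have "wf_graph K" "graph_iso K C" unfolding iso_class_def by simp_all
    then have "\<phi> K = \<phi> C" using w by (intro inv)
    then show ?thesis unfolding \<psi>_def C_def[symmetric] K(1)[symmetric] by simp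
  qed
  have "(\<Sum>x\<in>verts X. \<phi> (card_del X x)) = (\<Sum>x\<in>verts X. \<psi> (iso_class (card_del X x)))"
    by (rule sum.cong[OF refl eqx])
  also have "\<dots> = sum_mset (image_mset \<psi> (deck X))"
    unfolding deck_def sum_unfold_sum_mset image_mset.compositionality by (simp add: comp_def)
  finally show ?thesis unfolding \<psi>_def .
qed

lemma sum_deck_eq:
  assumes "wf_graph G" "wf_graph H" "deck H = deck G"
    and inv: "\<And>A B. wf_graph A \<Longrightarrow> wf_graph B \<Longrightarrow> graph_iso A B \<Longrightarrow> \<phi> A = \<phi> B"
  shows "(\<Sum>x\<in>verts H. \<phi> (card_del H x)) = (\<Sum>x\<in>verts G. \<phi> (card_del G x))"
proof -
  have "(\<Sum>x\<in>verts H. \<phi> (card_del H x)) = sum_mset (image_mset (\<lambda>C. \<phi> (SOME K. K \<in> C)) (deck H))"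
    by (rule sum_deck[OF assms(2) inv])
  also have "\<dots> = sum_mset (image_mset (\<lambda>C. \<phi> (SOME K. K \<in> C)) (deck G))"
    by (simp only: assms(3))
  also have "\<dots> = (\<Sum>x\<in>verts G. \<phi> (card_del G x))"
    by (rule sum_deck[OF assms(1) inv, symmetric])
  finally show ?thesis .
qed

lemma card_deck: "wf_graph X \<Longrightarrow> size (deck X) = card (verts X)"
  unfolding deck_def by simp

lemma match_card:
  assumes "wf_graph G" "wf_graph H" "deck H = deck G" "x \<in> verts H"
  shows "\<exists>w \<in> verts G. graph_iso (card_del H x) (card_del G w)"
proof -
  have "iso_class (card_del H x) \<in># deck H"
    using assms(2,4) wfD(1)[OF assms(2)] unfolding deck_def by simp
  then have "iso_class (card_del H x) \<in># deck G" using assms(3) by simp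
  then obtain w where w: "w \<in> verts G" "iso_class (card_del H x) = iso_class (card_del G w)"
    using wfD(1)[OF assms(1)] unfolding deck_def by auto
  have "card_del H x \<in> iso_class (card_del H x)"
    by (rule self_in_iso_class[OF wf_card_del[OF assms(2)]])
  then have "card_del H x \<in> iso_class (card_del G w)" using w(2) by simp
  then show ?thesis using w(1) unfolding iso_class_def by blast
qed

lemma card_ind: "finite B \<Longrightarrow> card {p \<in> B. P p} = (\<Sum>p\<in>B. if P p then 1 else 0)"
  by (simp add: sum.inter_filter[symmetric])

lemma kelly_edges:
  assumes wf: "wf_graph X"
  shows "(\<Sum>x\<in>verts X. ecount (card_del X x)) = (card (verts X) - 2) * ecount X"
proof -
  let ?V = "verts X"
  have fin: "finite ?V" using wfD(1)[OF wf] .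
  have "(\<Sum>x\<in>?V. ecount (card_del X x))
      = (\<Sum>x\<in>?V. \<Sum>p\<in>?V \<times> ?V. if adj X (fst p) (snd p) \<and> fst p \<noteq> x \<and> snd p \<noteq> x then 1 else 0)"
  proof (rule sum.cong[OF refl])
    fix x assume "x \<in> ?V"
    have "ecount (card_del X x) = card {p \<in> ?V \<times> ?V. adj X (fst p) (snd p) \<and> fst p \<noteq> x \<and> snd p \<noteq> x}"
      unfolding ecount_def by (rule arg_cong[where f=card]) auto
    then show "ecount (card_del X x) = (\<Sum>p\<in>?V \<times> ?V. if adj X (fst p) (snd p) \<and> fst p \<noteq> x \<and> snd p \<noteq> x then 1 else 0)"
      using fin by (simp add: card_ind)
  qed
  also have "\<dots> = (\<Sum>p\<in>?V \<times> ?V. \<Sum>x\<in>?V. if adj X (fst p) (snd p) \<and> fst p \<noteq> x \<and> snd p \<noteq> x then 1 else 0)"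
    by (rule sum.swap)
  also have "\<dots> = (\<Sum>p\<in>?V \<times> ?V. if adj X (fst p) (snd p) then card ?V - 2 else 0)"
  proof (rule sum.cong[OF refl])
    fix p assume p: "p \<in> ?V \<times> ?V"
    show "(\<Sum>x\<in>?V. if adj X (fst p) (snd p) \<and> fst p \<noteq> x \<and> snd p \<noteq> x then 1 else 0)
       = (if adj X (fst p) (snd p) then card ?V - 2 else 0)"
    proof (cases "adj X (fst p) (snd p)")
      case True
      then have ne: "fst p \<noteq> snd p" using wfD(5)[OF wf] by force
      have "(\<Sum>x\<in>?V. if adj X (fst p) (snd p) \<and> fst p \<noteq> x \<and> snd p \<noteq> x then 1 else 0)
          = card {x \<in> ?V. fst p \<noteq> x \<and> snd p \<noteq> x}" using True fin by (simp add: card_ind)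
      also have "{x \<in> ?V. fst p \<noteq> x \<and> snd p \<noteq> x} = ?V - {fst p, snd p}" by auto
      also have "card \<dots> = card ?V - 2" using p ne fin by (auto simp: card_Diff_subset)
      finally show ?thesis using True by simp
    qed simp
  qed
  also have "\<dots> = (card ?V - 2) * ecount X"
    unfolding ecount_def using fin by (auto simp: card_ind sum_distrib_left intro!: sum.cong)
  finally show ?thesis .
qed

lemma edge_split:
  assumes wf: "wf_graph X" and x: "x \<in> verts X"
  shows "ecount X = ecount (card_del X x) + 2 * card (nbrs X x)"
proof -
  let ?V = "verts X"
  have fin: "finite ?V" using wfD(1)[OF wf] .
  have eq: "{p \<in> ?V \<times> ?V. adj X (fst p) (snd p)} =
     ({p \<in> (?V - {x}) \<times> (?V - {x}). adj X (fst p) (snd p)} \<union> {x} \<times> nbrs X x) \<union> nbrs X x \<times> {x}"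
    using x wfD[OF wf] unfolding nbrs_def by auto
  have c1: "card ({p \<in> (?V - {x}) \<times> (?V - {x}). adj X (fst p) (snd p)} \<union> {x} \<times> nbrs X x)
     = ecount (card_del X x) + card (nbrs X x)"
  proof -
    have "ecount (card_del X x) = card {p \<in> (?V - {x}) \<times> (?V - {x}). adj X (fst p) (snd p)}"
      unfolding ecount_def by (rule arg_cong[where f=card]) auto
    moreover have "card ({x} \<times> nbrs X x) = card (nbrs X x)" by (simp add: card_cartesian_product)
    moreover have "finite (nbrs X x)" using fin unfolding nbrs_def by simp
    ultimately show ?thesis using fin by (subst card_Un_disjoint) auto
  qed
  have fn: "finite (nbrs X x)" using fin unfolding nbrs_def by simp
  have "card X' = card ({p \<in> (?V - {x}) \<times> (?V - {x}). adj X (fst p) (snd p)} \<union> {x} \<times> nbrs X x) + card (nbrs X x \<times> {x})"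
    if "X' = ({p \<in> (?V - {x}) \<times> (?V - {x}). adj X (fst p) (snd p)} \<union> {x} \<times> nbrs X x) \<union> nbrs X x \<times> {x}" for X'
    unfolding that using fin fn wfD(5)[OF wf] by (subst card_Un_disjoint) (auto simp: nbrs_def)
  then show ?thesis unfolding ecount_def eq c1 by (simp add: card_cartesian_product)
qed


lemma cnnset_sub: "cnnset X a b \<subseteq> verts X - {a, b}"
  unfolding cnnset_def by auto

lemma cnnset_fin: "wf_graph X \<Longrightarrow> finite (cnnset X a b)"
  using cnnset_sub wfD(1) by (metis finite_Diff finite_subset)

lemma cnn_del:
  assumes wf: "wf_graph X" and "a \<noteq> x" "b \<noteq> x"
  shows "cnn (card_del X x) a b = cnn X a b - (if x \<in> cnnset X a b then 1 else 0)"
proof -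
  have "cnnset (card_del X x) a b = cnnset X a b - {x}"
    using assms(2,3) unfolding cnnset_def by auto
  then show ?thesis unfolding cnn_def using cnnset_fin[OF wf] by (simp add: card_Diff_singleton_if)
qed

lemma NE_ident:
  assumes wf: "wf_graph X"
  shows "(\<Sum>x\<in>verts X. NE (card_del X x) k) = (card (verts X) - 2 - k) * NE X k + Suc k * NE X (Suc k)"
proof -
  let ?V = "verts X"
  have fin: "finite ?V" using wfD(1)[OF wf] .
  define Q where "Q = (\<lambda>x p. adj X (fst p) (snd p) \<and> fst p \<noteq> x \<and> snd p \<noteq> x \<and>
      cnn X (fst p) (snd p) - (if x \<in> cnnset X (fst p) (snd p) then 1 else 0) = k)"
  define g where "g = (\<lambda>p. if adj X (fst p) (snd p) \<and> cnn X (fst p) (snd p) = k then card ?V - 2 - k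
      else if adj X (fst p) (snd p) \<and> cnn X (fst p) (snd p) = Suc k then Suc k else 0)"
  have "(\<Sum>x\<in>?V. NE (card_del X x) k) = (\<Sum>x\<in>?V. \<Sum>p\<in>?V \<times> ?V. if Q x p then 1 else 0)"
  proof (rule sum.cong[OF refl])
    fix x assume "x \<in> ?V"
    have "NE (card_del X x) k = card {p \<in> ?V \<times> ?V. Q x p}"
      unfolding NE_def
    proof (rule arg_cong[where f=card])
      show "{p \<in> verts (card_del X x) \<times> verts (card_del X x).
          adj (card_del X x) (fst p) (snd p) \<and> cnn (card_del X x) (fst p) (snd p) = k} = {p \<in> ?V \<times> ?V. Q x p}"
        unfolding Q_def using cnn_del[OF wf] by auto
    qed
    then show "NE (card_del X x) k = (\<Sum>p\<in>?V \<times> ?V. if Q x p then 1 else 0)"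
      using fin by (simp add: card_ind)
  qed
  also have "\<dots> = (\<Sum>p\<in>?V \<times> ?V. \<Sum>x\<in>?V. if Q x p then 1 else 0)"
    by (rule sum.swap)
  also have "\<dots> = (\<Sum>p\<in>?V \<times> ?V. g p)"
  proof (rule sum.cong[OF refl])
    fix p assume p: "p \<in> ?V \<times> ?V"
    obtain a b where ab: "p = (a, b)" by (cases p)
    define S where "S = cnnset X a b"
    have Sfin: "finite S" unfolding S_def using cnnset_fin[OF wf] .
    have Ssub: "S \<subseteq> ?V - {a, b}" unfolding S_def by (rule cnnset_sub)
    have cS: "cnn X a b = card S" unfolding S_def cnn_def ..
    have pos: "x \<in> S \<Longrightarrow> card S > 0" for x using Sfin card_gt_0_iff by blast
    have "(\<Sum>x\<in>?V. if Q x p then 1 else 0) = card {x \<in> ?V. Q x p}"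
      using fin by (simp add: card_ind)
    also have "\<dots> = g p"
    proof (cases "adj X a b")
      case False
      then show ?thesis unfolding Q_def g_def ab by simp
    next
      case True
      have ne: "a \<noteq> b" using True wfD(5)[OF wf] by force
      have abV: "a \<in> ?V" "b \<in> ?V" using p ab by auto
      show ?thesis
      proof (cases "card S = k")
        case True2: True
        have "{x \<in> ?V. Q x p} = (?V - {a, b}) - S"
          unfolding Q_def ab using True True2 by (auto simp: cS S_def[symmetric] dest: pos)
        moreover have "card ((?V - {a, b}) - S) = card ?V - 2 - k"
        proof -
          have "card (?V - {a, b}) = card ?V - 2" using fin ne abV by (simp add: card_Diff_subset)
          moreover have "finite S" by (rule Sfin)
          ultimately show ?thesis using Ssub True2 by (simp add: card_Diff_subset)
        qed
        ultimately show ?thesis unfolding g_def ab using True True2 cS by simp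
      next
        case False2: False
        show ?thesis
        proof (cases "card S = Suc k")
          case True3: True
          have "{x \<in> ?V. Q x p} = S"
            unfolding Q_def ab using True True3 Ssub by (auto simp: cS S_def[symmetric])
          then show ?thesis unfolding g_def ab using True True3 cS by simp
        next
          case False3: False
          have e0: "{x \<in> ?V. Q x p} = {}"
            unfolding Q_def ab using True False2 False3 by (auto simp: cS S_def[symmetric] dest: pos)
          have g0: "g p = 0" unfolding g_def ab using True False2 False3 cS by simp
          show ?thesis unfolding e0 g0 by simp
        qed
      qed
    qed
    finally show "(\<Sum>x\<in>?V. if Q x p then 1 else 0) = g p" .
  qed
  also have "\<dots> = (\<Sum>p\<in>?V \<times> ?V. (card ?V - 2 - k) * (if adj X (fst p) (snd p) \<and> cnn X (fst p) (snd p) = k then 1 else 0)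
       + Suc k * (if adj X (fst p) (snd p) \<and> cnn X (fst p) (snd p) = Suc k then 1 else 0))"
    unfolding g_def by (rule sum.cong) auto
  also have "\<dots> = (card ?V - 2 - k) * NE X k + Suc k * NE X (Suc k)"
    unfolding NE_def using fin by (simp add: card_ind sum.distrib sum_distrib_left)
  finally show ?thesis .
qed


lemma verts_compl[simp]: "verts (complement X) = verts X"
  by (simp add: complement_def verts_def)
lemma adj_compl[simp]: "adj (complement X) x y = (x \<in> verts X \<and> y \<in> verts X \<and> x \<noteq> y \<and> \<not> adj X x y)"
  by (simp add: complement_def adj_def verts_def)

lemma rel2: "(R ^^ 2) a b \<longleftrightarrow> (\<exists>w. R a w \<and> R w b)"
  by (simp add: numeral_2_eq_2 relcompp_apply)

lemma gdist_le: "(adj C ^^ n) a b \<Longrightarrow> gdist C a b \<le> enat n"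
  unfolding gdist_def by (auto intro: Least_le)

lemma cnn0: assumes "wf_graph X" shows "cnn X a b = 0 \<longleftrightarrow> cnnset X a b = {}"
  unfolding cnn_def using cnnset_fin[OF assms, of a b] by simp

lemma diam_H:
  assumes wf: "wf_graph X" and e: "adj X a b" and c: "cnn X a b = 0"
  shows "diam (complement X) \<ge> 3"
proof -
  let ?C = "complement X"
  have ab: "a \<in> verts X" "b \<in> verts X" "a \<noteq> b" using wfD(2)[OF wf e] wfD(3)[OF wf e] wfD(5)[OF wf, of a] e by auto
  have S: "cnnset X a b = {}" using cnn0[OF wf] c by blast
  have g: "gdist ?C a b \<ge> 3"
  proof (cases "\<exists>n. (adj ?C ^^ n) a b")
    case False
    then show ?thesis unfolding gdist_def by simp
  next
    case True
    define m where "m = (LEAST n. (adj ?C ^^ n) a b)"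
    have pm: "(adj ?C ^^ m) a b" unfolding m_def using True by (rule LeastI_ex)
    have "m \<noteq> 0"
    proof
      assume "m = 0"
      then have "a = b" using pm by simp
      then show False using ab by simp
    qed
    moreover have "m \<noteq> 1" using pm e by auto
    moreover have "m \<noteq> 2"
    proof
      assume "m = 2"
      then obtain w where "adj ?C a w" "adj ?C w b" using pm rel2 by metis
      then have "w \<in> cnnset X a b" unfolding cnnset_def using wfD(4)[OF wf] by auto
      then show False using S by blast
    qed
    ultimately have "m \<ge> 3" by linarith
    then show ?thesis unfolding gdist_def m_def[symmetric] using True by (simp add: numeral_eq_enat)
  qed
  have "gdist ?C a b \<le> diam ?C" unfolding diam_def
    using ab by (intro SUP_upper2[of "(a,b)"]) auto
  then show ?thesis using g by (rule order_trans[rotated])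
qed

lemma diam_G:
  assumes wf: "wf_graph X" and d: "diam (complement X) \<ge> 3"
  shows "\<exists>a b. adj X a b \<and> cnn X a b = 0"
proof (rule ccontr)
  assume na: "\<not> (\<exists>a b. adj X a b \<and> cnn X a b = 0)"
  let ?C = "complement X"
  have "gdist ?C (fst p) (snd p) \<le> 2" if p: "p \<in> verts X \<times> verts X" for p
  proof -
    obtain a b where ab: "p = (a, b)" by (cases p)
    have av: "a \<in> verts X" "b \<in> verts X" using p ab by auto
    have "\<exists>n \<le> 2. (adj ?C ^^ n) a b"
    proof (cases "a = b")
      case True
      then show ?thesis by (intro exI[of _ 0]) auto
    next
      case False
      show ?thesis
      proof (cases "adj X a b")
        case False2: False
        then show ?thesis using av False by (intro exI[of _ 1]) auto
      next
        case True
        then have "cnnset X a b \<noteq> {}" using na cnn0[OF wf] by blast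
        then obtain w where w: "w \<in> cnnset X a b" by blast
        then have "adj ?C a w" "adj ?C w b" unfolding cnnset_def using av wfD(4)[OF wf] by auto
        then have "(adj ?C ^^ 2) a b" using rel2 by metis
        then show ?thesis by (intro exI[of _ 2]) auto
      qed
    qed
    then obtain n where n: "n \<le> 2" "(adj ?C ^^ n) a b" by blast
    have "gdist ?C a b \<le> enat n" by (rule gdist_le[OF n(2)])
    also have "\<dots> \<le> 2" using n(1) by (simp add: numeral_eq_enat)
    finally show ?thesis using ab by simp
  qed
  then have "diam ?C \<le> 2" unfolding diam_def by (intro SUP_least) auto
  with d have "(3::enat) \<le> 2" by (rule order_trans)
  then show False by simp
qed

lemma domnum_G:
  assumes wf: "wf_graph X" and dn: "domination_number X = 2"
    and d: "d \<in> verts X" and dom: "\<forall>y\<in>verts X. y = d \<or> adj X y d"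
  shows False
proof -
  have "dominating X {d}" unfolding dominating_def using d dom by auto
  then have "domination_number X \<le> 1" unfolding domination_number_def
    by (intro Least_le) (rule exI[of _ "{d}"], simp)
  then show False using dn by simp
qed

lemma domnum_H:
  assumes wf: "wf_graph X" and ne: "verts X \<noteq> {}"
    and nd: "\<forall>d\<in>verts X. \<not> (\<forall>y\<in>verts X. y = d \<or> adj X y d)"
    and e: "adj X a b" and c: "cnn X a b = 0"
  shows "domination_number X = 2"
  unfolding domination_number_def
proof (rule Least_equality)
  have ab: "a \<in> verts X" "b \<in> verts X" "a \<noteq> b" using wfD(2)[OF wf e] wfD(3)[OF wf e] wfD(5)[OF wf, of a] e by auto
  have S: "cnnset X a b = {}" using cnn0[OF wf] c by blast
  have "dominating X {a, b}" unfolding dominating_def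
  proof (intro conjI ballI)
    show "{a, b} \<subseteq> verts X" using ab by auto
    fix v assume v: "v \<in> verts X"
    show "v \<in> {a, b} \<or> (\<exists>d\<in>{a, b}. adj X v d)"
    proof (cases "v \<in> {a, b}")
      case False
      then have "v \<notin> cnnset X a b" using S by blast
      then have "adj X a v \<or> adj X b v" using v False unfolding cnnset_def by auto
      then show ?thesis using wfD(4)[OF wf] by blast
    qed simp
  qed
  then show "\<exists>D. dominating X D \<and> card D = 2" using ab by (intro exI[of _ "{a,b}"]) auto
next
  fix k assume "\<exists>D. dominating X D \<and> card D = k"
  then obtain D where D: "dominating X D" "card D = k" by blast
  have Dsub: "D \<subseteq> verts X" using D(1) unfolding dominating_def by blast
  have finD: "finite D" using Dsub wfD(1)[OF wf] finite_subset by blast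
  show "2 \<le> k"
  proof (rule ccontr)
    assume "\<not> 2 \<le> k"
    then have "k = 0 \<or> k = 1" by linarith
    then show False
    proof
      assume "k = 0"
      then have "D = {}" using D(2) finD by simp
      then show False using D(1) ne unfolding dominating_def by auto
    next
      assume "k = 1"
      then obtain d where "D = {d}" using D(2) card_1_singletonE by blast
      then show False using D(1) nd unfolding dominating_def by auto
    qed
  qed
qed

lemma domv_iff:
  assumes wf: "wf_graph X" and d: "d \<in> verts X"
  shows "(\<forall>y\<in>verts X. y = d \<or> adj X y d) \<longleftrightarrow> card (nbrs X d) = card (verts X) - 1"
proof -
  have sub: "nbrs X d \<subseteq> verts X - {d}" unfolding nbrs_def using wfD(5)[OF wf] by auto
  have fin: "finite (verts X - {d})" using wfD(1)[OF wf] by simp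
  have cV: "card (verts X - {d}) = card (verts X) - 1" using d wfD(1)[OF wf] by simp
  show ?thesis
  proof
    assume "\<forall>y\<in>verts X. y = d \<or> adj X y d"
    then have "nbrs X d = verts X - {d}" using sub wfD(4)[OF wf] unfolding nbrs_def by auto
    then show "card (nbrs X d) = card (verts X) - 1" using cV by simp
  next
    assume "card (nbrs X d) = card (verts X) - 1"
    then have "nbrs X d = verts X - {d}" using card_subset_eq[OF fin sub] cV by simp
    then show "\<forall>y\<in>verts X. y = d \<or> adj X y d" unfolding nbrs_def using wfD(4)[OF wf] by blast
  qed
qed

lemma no_iso_edge:
  assumes wf: "wf_graph X" and uv: "adj X u v" "cnn X u v = 0" and n3: "card (verts X) \<ge> 3"
    and ab: "adj X a b" and iso: "\<forall>y\<in>verts X - {a, b}. \<not> adj X a y \<and> \<not> adj X b y"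
  shows False
proof -
  have S: "cnnset X u v = {}" using cnn0[OF wf] uv(2) by blast
  have sym: "\<And>x y. adj X x y \<Longrightarrow> adj X y x" using wfD(4)[OF wf] by blast
  have uV: "u \<in> verts X" "v \<in> verts X" "a \<in> verts X" "b \<in> verts X" using uv ab wfD[OF wf] by auto
  have nab: "y \<in> verts X \<Longrightarrow> y \<notin> {a, b} \<Longrightarrow> \<not> adj X y a \<and> \<not> adj X y b" for y
    using iso sym by blast
  show False
  proof (cases "u \<in> {a, b}")
    case True
    have vab: "v \<in> {a, b}"
    proof (rule ccontr)
      assume "v \<notin> {a, b}"
      then have "\<not> adj X v u" using nab uV True by blast
      then show False using sym uv(1) by blast
    qed
    have "card (verts X - {a, b}) > 0"
    proof -
      have "card (verts X - {a, b}) \<ge> card (verts X) - card {a, b}" by (rule diff_card_le_card_Diff) simp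
      moreover have "card {a, b} \<le> 2" by (simp add: card_insert_le_m1)
      ultimately show ?thesis using n3 by linarith
    qed
    then obtain w where w: "w \<in> verts X - {a, b}" by (metis card.empty all_not_in_conv less_irrefl)
    have "w \<in> cnnset X u v" unfolding cnnset_def using w True vab nab[of w] sym by auto
    then show False using S by blast
  next
    case False
    have vab: "v \<notin> {a, b}"
    proof
      assume "v \<in> {a, b}"
      then have "\<not> adj X u v" using nab uV False by blast
      then show False using uv(1) by blast
    qed
    have "a \<in> cnnset X u v" unfolding cnnset_def using uV False vab nab[of u] nab[of v] sym by auto
    then show False using S by blast
  qed
qed


lemma card_ne0_ex: "card {p \<in> A. P p} \<noteq> 0 \<Longrightarrow> \<exists>p\<in>A. P p"
  by (cases "{p \<in> A. P p} = {}") auto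

theorem lemma11:
  fixes G H :: "'a sgraph"
  assumes "H3 G"
    and "wf_graph H"
    and "deck H = deck G"
  shows "H3 H"
proof -
  have wfG: "wf_graph G" and n12: "card (verts G) \<ge> 12" and dnG: "domination_number G = 2"
    and dmG: "diam (complement G) \<ge> 3" using assms(1) unfolding H3_def by auto
  have wfH: "wf_graph H" by (rule assms(2))
  have dk: "deck H = deck G" by (rule assms(3))
  define n where "n = card (verts G)"
  have cardH: "card (verts H) = n"
    using card_deck[OF wfG] card_deck[OF wfH] dk unfolding n_def by simp
  obtain u v where uv: "adj G u v" "cnn G u v = 0" using diam_G[OF wfG dmG] by blast
  have noDomG: "\<And>d. d \<in> verts G \<Longrightarrow> \<not> (\<forall>y\<in>verts G. y = d \<or> adj G y d)"
    using domnum_G[OF wfG dnG] by blast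
  have symH: "\<And>x y. adj H x y \<Longrightarrow> adj H y x" using wfD(4)[OF wfH] by blast
  have symG: "\<And>x y. adj G x y \<Longrightarrow> adj G y x" using wfD(4)[OF wfG] by blast
  have invE: "\<And>A B. wf_graph A \<Longrightarrow> wf_graph B \<Longrightarrow> graph_iso A B \<Longrightarrow> ecount A = ecount B"
    by (rule iso_inv(1))
  have "(\<Sum>x\<in>verts H. ecount (card_del H x)) = (\<Sum>x\<in>verts G. ecount (card_del G x))"
    by (rule sum_deck_eq[OF wfG wfH dk invE])
  then have "(n - 2) * ecount H = (n - 2) * ecount G"
    using kelly_edges[OF wfG] kelly_edges[OF wfH] cardH unfolding n_def by simp
  then have eE: "ecount H = ecount G" using n12 unfolding n_def by simp
  have degT: "\<exists>w\<in>verts G. graph_iso (card_del H x) (card_del G w) \<and> card (nbrs H x) = card (nbrs G w)"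
    if x: "x \<in> verts H" for x
  proof -
    obtain w where w: "w \<in> verts G" "graph_iso (card_del H x) (card_del G w)"
      using match_card[OF wfG wfH dk x] by blast
    have "ecount (card_del H x) = ecount (card_del G w)"
      by (rule iso_inv(1)[OF wf_card_del[OF wfH] wf_card_del[OF wfG] w(2)])
    then have "card (nbrs H x) = card (nbrs G w)"
      using edge_split[OF wfH x] edge_split[OF wfG w(1)] eE by simp
    then show ?thesis using w by blast
  qed
  have noDomH: "\<forall>d\<in>verts H. \<not> (\<forall>y\<in>verts H. y = d \<or> adj H y d)"
  proof (intro ballI notI)
    fix d assume d: "d \<in> verts H" and dd: "\<forall>y\<in>verts H. y = d \<or> adj H y d"
    then have "card (nbrs H d) = n - 1" using domv_iff[OF wfH d] cardH by simp
    then obtain w where w: "w \<in> verts G" "card (nbrs G w) = n - 1" using degT[OF d] by auto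
    then have "\<forall>y\<in>verts G. y = w \<or> adj G y w" using domv_iff[OF wfG w(1)] unfolding n_def by simp
    then show False using noDomG w(1) by blast
  qed
  have n3: "card (verts G) \<ge> 3" using n12 by simp
  have topG: "NE G (n - 2) = 0"
  proof (rule ccontr)
    assume "NE G (n - 2) \<noteq> 0"
    then have "\<exists>p\<in>verts G \<times> verts G. adj G (fst p) (snd p) \<and> cnn G (fst p) (snd p) = n - 2"
      unfolding NE_def by (rule card_ne0_ex)
    then obtain p where p: "p \<in> verts G \<times> verts G" "adj G (fst p) (snd p)" "cnn G (fst p) (snd p) = n - 2"
      by blast
    obtain a b where ab: "p = (a, b)" by (cases p)
    have e: "adj G a b" using p ab by simp
    have ne: "a \<noteq> b" using e wfD(5)[OF wfG] by force
    have fin: "finite (verts G - {a, b})" using wfD(1)[OF wfG] by simp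
    have "card (verts G - {a, b}) = n - 2" using p ab ne wfD(1)[OF wfG] unfolding n_def
      by (simp add: card_Diff_subset)
    then have "cnnset G a b = verts G - {a, b}"
      using card_subset_eq[OF fin cnnset_sub] p ab unfolding cnn_def by simp
    then have "\<forall>y\<in>verts G - {a, b}. \<not> adj G a y \<and> \<not> adj G b y" unfolding cnnset_def by blast
    then show False using no_iso_edge[OF wfG uv n3 e] by blast
  qed
  have topH: "NE H (n - 2) = 0"
  proof (rule ccontr)
    assume "NE H (n - 2) \<noteq> 0"
    then have "\<exists>p\<in>verts H \<times> verts H. adj H (fst p) (snd p) \<and> cnn H (fst p) (snd p) = n - 2"
      unfolding NE_def by (rule card_ne0_ex)
    then obtain p where p: "p \<in> verts H \<times> verts H" "adj H (fst p) (snd p)" "cnn H (fst p) (snd p) = n - 2"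
      by blast
    obtain a b where ab: "p = (a, b)" by (cases p)
    have e: "adj H a b" using p ab by simp
    have ne: "a \<noteq> b" using e wfD(5)[OF wfH] by force
    have aV: "a \<in> verts H" "b \<in> verts H" using p ab by auto
    have fin: "finite (verts H - {a, b})" using wfD(1)[OF wfH] by simp
    have "card (verts H - {a, b}) = n - 2" using p ab ne wfD(1)[OF wfH] cardH
      by (simp add: card_Diff_subset)
    then have "cnnset H a b = verts H - {a, b}"
      using card_subset_eq[OF fin cnnset_sub] p ab unfolding cnn_def by simp
    then have isoab: "\<forall>y\<in>verts H - {a, b}. \<not> adj H a y \<and> \<not> adj H b y" unfolding cnnset_def by blast
    have "nbrs H a = {b}"
    proof
      show "nbrs H a \<subseteq> {b}"
      proof
        fix y assume "y \<in> nbrs H a"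
        then have y: "y \<in> verts H" "adj H a y" unfolding nbrs_def by auto
        have "y \<noteq> a" using y(2) wfD(5)[OF wfH] by force
        then show "y \<in> {b}" using isoab y by blast
      qed
      show "{b} \<subseteq> nbrs H a" using e aV unfolding nbrs_def by auto
    qed
    then have "card (nbrs H a) = 1" by simp
    then obtain w where w: "w \<in> verts G" "graph_iso (card_del H a) (card_del G w)" "card (nbrs G w) = 1"
      using degT[OF aV(1)] by auto
    obtain f where f: "bij_betw f (verts H - {a}) (verts G - {w})"
      and fa: "\<And>x y. x \<in> verts H - {a} \<Longrightarrow> y \<in> verts H - {a} \<Longrightarrow>
                adj (card_del H a) x y = adj (card_del G w) (f x) (f y)"
      using w(2) unfolding graph_iso_def by auto
    have im: "f ` (verts H - {a}) = verts G - {w}" using f by (simp add: bij_betw_def)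
    have bA: "b \<in> verts H - {a}" using aV ne by auto
    define b' where "b' = f b"
    have b'V: "b' \<in> verts G - {w}" using im bA unfolding b'_def by blast
    have nb: "\<not> adj G b' y" if y: "y \<in> verts G - {w}" for y
    proof
      assume abd: "adj G b' y"
      obtain z where z: "z \<in> verts H - {a}" "y = f z" using y im by blast
      have "adj (card_del G w) (f b) (f z)" using abd b'V y z unfolding b'_def by simp
      then have "adj (card_del H a) b z" using fa[OF bA z(1)] by simp
      then have "adj H b z" "z \<noteq> a" by auto
      moreover have "z \<noteq> b" using \<open>adj H b z\<close> wfD(5)[OF wfH] by force
      ultimately show False using isoab z(1) by blast
    qed
    have fnG: "finite (nbrs G w)" using wfD(1)[OF wfG] unfolding nbrs_def by simp
    show False
    proof (cases "adj G b' w")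
      case True
      have "b' \<in> nbrs G w" using True symG b'V unfolding nbrs_def by blast
      then have nw: "nbrs G w = {b'}" using w(3) fnG by (metis card_1_singletonE singletonD)
      have "\<forall>y\<in>verts G - {b', w}. \<not> adj G b' y \<and> \<not> adj G w y"
      proof
        fix y assume y: "y \<in> verts G - {b', w}"
        have "\<not> adj G b' y" using nb y by blast
        moreover have "\<not> adj G w y" using nw y unfolding nbrs_def by blast
        ultimately show "\<not> adj G b' y \<and> \<not> adj G w y" by blast
      qed
      then show False using no_iso_edge[OF wfG uv n3 True] by blast
    next
      case False
      have nall: "\<not> adj G b' y" for y
      proof (cases "y = w")
        case True then show ?thesis using False by simp
      next
        case False2: False
        show ?thesis
        proof
          assume "adj G b' y"
          moreover then have "y \<in> verts G" using wfD(3)[OF wfG] by blast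
          ultimately show False using nb False2 by blast
        qed
      qed
      have "b' \<noteq> u" using nall uv(1) by blast
      moreover have "b' \<noteq> v" using nall symG uv(1) by blast
      ultimately have "b' \<in> cnnset G u v" unfolding cnnset_def using b'V nall symG by blast
      then show False using cnn0[OF wfG] uv(2) by blast
    qed
  qed
  have invN: "\<And>A B. wf_graph A \<Longrightarrow> wf_graph B \<Longrightarrow> graph_iso A B \<Longrightarrow> NE A k = NE B k" for k
    by (rule iso_inv(2))
  have idk: "(n - 2 - k) * NE H k + Suc k * NE H (Suc k) = (n - 2 - k) * NE G k + Suc k * NE G (Suc k)" for k
  proof -
    have "(\<Sum>x\<in>verts H. NE (card_del H x) k) = (\<Sum>x\<in>verts G. NE (card_del G x) k)"
      by (rule sum_deck_eq[OF wfG wfH dk invN])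
    then show ?thesis using NE_ident[OF wfG, of k] NE_ident[OF wfH, of k] cardH unfolding n_def by simp
  qed
  have eqj: "j \<le> n - 2 \<Longrightarrow> NE H (n - 2 - j) = NE G (n - 2 - j)" for j
  proof (induction j)
    case 0
    then show ?case using topG topH by simp
  next
    case (Suc j)
    define k where "k = n - 2 - Suc j"
    have sk: "Suc k = n - 2 - j" using Suc.prems unfolding k_def by simp
    have pos: "n - 2 - k = Suc j" using Suc.prems unfolding k_def by simp
    have eS: "NE H (Suc k) = NE G (Suc k)" using Suc sk by simp
    have "(n - 2 - k) * NE H k + Suc k * NE H (Suc k) = (n - 2 - k) * NE G k + Suc k * NE H (Suc k)"
      using idk[of k] unfolding eS .
    then have "(n - 2 - k) * NE H k = (n - 2 - k) * NE G k" by (rule add_right_imp_eq)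
    then have "Suc j * NE H k = Suc j * NE G k" unfolding pos .
    then show ?case unfolding k_def[symmetric] by (rule mult_left_cancel[THEN iffD1, rotated]) simp
  qed
  have NE0: "NE H 0 = NE G 0" using eqj[of "n - 2"] by simp
  have uvV: "u \<in> verts G" "v \<in> verts G" using wfD(2)[OF wfG uv(1)] wfD(3)[OF wfG uv(1)] .
  have mem: "(u, v) \<in> {p \<in> verts G \<times> verts G. adj G (fst p) (snd p) \<and> cnn G (fst p) (snd p) = 0}"
    using uv uvV by simp
  have finS: "finite {p \<in> verts G \<times> verts G. adj G (fst p) (snd p) \<and> cnn G (fst p) (snd p) = 0}"
    using wfD(1)[OF wfG] by simp
  have "0 < NE G 0" unfolding NE_def card_gt_0_iff using finS mem by blast
  then have "NE G 0 \<noteq> 0" by simp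
  then have "NE H 0 \<noteq> 0" using NE0 by simp
  then have "\<exists>p\<in>verts H \<times> verts H. adj H (fst p) (snd p) \<and> cnn H (fst p) (snd p) = 0"
      unfolding NE_def by (rule card_ne0_ex)
    then obtain p where p: "p \<in> verts H \<times> verts H" "adj H (fst p) (snd p)" "cnn H (fst p) (snd p) = 0"
      by blast
  have neH: "verts H \<noteq> {}" using p by auto
  have "domination_number H = 2" by (rule domnum_H[OF wfH neH noDomH p(2,3)])
  moreover have "diam (complement H) \<ge> 3" by (rule diam_H[OF wfH p(2,3)])
  moreover have "card (verts H) \<ge> 12" using cardH n12 unfolding n_def by simp
  ultimately show ?thesis unfolding H3_def using wfH by simp
qed

end
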